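(* Let $X,Y$ be mild $E\mathcal M$-simplicial sets. Then $X\boxtimes Y\subset X\times Y$ is a mild $E\mathcal M$-simplicial subset (for the diagonal action on $X\times Y$). Moreover, this construction is a simplicial subfunctor $E\mathcal M\text{-}\mathbf{SSet}^\mu\times E\mathcal M\text{-}\mathbf{SSet}^\mu\to E\mathcal M\text{-}\mathbf{SSet}^\mu$ of the cartesian product functor $E\mathcal M\text{-}\mathbf{SSet}^\mu\times E\mathcal M\text{-}\mathbf{SSet}^\mu\to E\mathcal M\text{-}\mathbf{SSet}$, and it preserves simplicial tensors in each variable, i.e.\ for every simplicial set $K$ the associativity isomorphism $K\times(X\times Y)\cong(K\times X)\times Y$ restricts to an isomorphism $K\times(X\boxtimes Y)\cong(K\times X)\boxtimes Y$, and similarly in the second variable.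
   Context: $\omega=\{1,2,\dots\}$, $\mathcal M$ the monoid of injections $\omega\to\omega$, $\mathcal M_A$ those fixing $A\subset\omega$ pointwise; $A$ co-infinite if $\omega\setminus A$ is infinite. $E\mathcal M$ is the simplicial monoid with $(E\mathcal M)_n=\mathcal M^{1+n}$, pointwise multiplication, structure maps by precomposition. $E\mathcal M\text{-}\mathbf{SSet}$ is the category of simplicial sets with left $E\mathcal M$-action. $x\in X_n$ is $k$-supported on $A$ if $i_k(u).x=x$ for all $u\in\mathcal M_A$ ($i_k$ inclusion of the $(1+k)$-th factor). $X$ is mild if every $x\in X_n$ is, for each $0\le k\le n$, $k$-supported on some co-infinite set; $E\mathcal M\text{-}\mathbf{SSet}^\mu$ is the full subcategory of mild objects. For simplicial sets $K$, $K\times X$ has $E\mathcal M$ acting on $X$ only. The box product $X\boxtimes Y$ of mild $X,Y$ consists in degree $n$ of all $(x,y)\in X_n\times Y_n$ such that for every $0\le k\le n$ there are $A_k,B_k\subset\omega$ with $A_k\cap B_k=\emptyset$ and $A_k\cup B_k$ co-infinite such that $x$ is $k$-supported on $A_k$ and $y$ is $k$-supported on $B_k$. *)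

theory Defs
  imports Main
begin

text \<open>Convention: the countable set omega = {1,2,...} is relabelled as the type nat
  (via n maps to n-1); injections omega to omega are functions nat to nat that are injective.\<close>

text \<open>A simplicial set is given by sets of n-simplices (cells n) together with the
  action of simplicial operators: for a monotone alpha from [m] to [n], smap m n alpha
  sends n-simplices to m-simplices.\<close>

record 'a sset =
  cells :: "nat \<Rightarrow> 'a set"
  smap  :: "nat \<Rightarrow> nat \<Rightarrow> (nat \<Rightarrow> nat) \<Rightarrow> 'a \<Rightarrow> 'a"

definition simp_op :: "nat \<Rightarrow> nat \<Rightarrow> (nat \<Rightarrow> nat) \<Rightarrow> bool" where
  "simp_op m n \<alpha> \<longleftrightarrow> (\<forall>i\<le>m. \<alpha> i \<le> n) \<and> (\<forall>i j. i \<le> j \<longrightarrow> j \<le> m \<longrightarrow> \<alpha> i \<le> \<alpha> j)"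

definition is_sset :: "('a, 'z) sset_scheme \<Rightarrow> bool" where
  "is_sset X \<longleftrightarrow>
     (\<forall>m n \<alpha> x. simp_op m n \<alpha> \<longrightarrow> x \<in> cells X n \<longrightarrow> smap X m n \<alpha> x \<in> cells X m) \<and>
     (\<forall>m n \<alpha> \<beta> x. (\<forall>i\<le>m. \<alpha> i = \<beta> i) \<longrightarrow> x \<in> cells X n \<longrightarrow>
         smap X m n \<alpha> x = smap X m n \<beta> x) \<and>
     (\<forall>n x. x \<in> cells X n \<longrightarrow> smap X n n id x = x) \<and>
     (\<forall>k m n \<alpha> \<beta> x. simp_op k m \<beta> \<longrightarrow> simp_op m n \<alpha> \<longrightarrow> x \<in> cells X n \<longrightarrow>
         smap X k m \<beta> (smap X m n \<alpha> x) = smap X k n (\<alpha> \<circ> \<beta>) x)"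

text \<open>The standard n-simplex: m-simplices are monotone maps [m] to [n]
  (normalised to be 0 outside [m]).\<close>

definition Delta :: "nat \<Rightarrow> (nat \<Rightarrow> nat) sset" where
  "Delta n = \<lparr> cells = (\<lambda>m. {\<alpha>. simp_op m n \<alpha> \<and> (\<forall>i>m. \<alpha> i = 0)}),
               smap = (\<lambda>m' m \<beta> \<alpha>. (\<lambda>i. if i \<le> m' then \<alpha> (\<beta> i) else 0)) \<rparr>"

text \<open>(E M)_n = M^(1+n): an n-simplex of E M is a tuple u with u k (k = 0..n) an injection.
  The action act n u on n-simplices.\<close>

record 'a emsset = "'a sset" +
  act :: "nat \<Rightarrow> (nat \<Rightarrow> nat \<Rightarrow> nat) \<Rightarrow> 'a \<Rightarrow> 'a"

definition emtuple :: "nat \<Rightarrow> (nat \<Rightarrow> nat \<Rightarrow> nat) \<Rightarrow> bool" where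
  "emtuple n u \<longleftrightarrow> (\<forall>k\<le>n. inj (u k))"

definition is_emsset :: "'a emsset \<Rightarrow> bool" where
  "is_emsset X \<longleftrightarrow> is_sset X \<and>
     (\<forall>n u x. emtuple n u \<longrightarrow> x \<in> cells X n \<longrightarrow> act X n u x \<in> cells X n) \<and>
     (\<forall>n x. x \<in> cells X n \<longrightarrow> act X n (\<lambda>k. id) x = x) \<and>
     (\<forall>n u v x. emtuple n u \<longrightarrow> emtuple n v \<longrightarrow> x \<in> cells X n \<longrightarrow>
         act X n u (act X n v x) = act X n (\<lambda>k. u k \<circ> v k) x) \<and>
     (\<forall>n u v x. (\<forall>k\<le>n. u k = v k) \<longrightarrow> x \<in> cells X n \<longrightarrow> act X n u x = act X n v x) \<and>
     (\<forall>m n \<alpha> u x. simp_op m n \<alpha> \<longrightarrow> emtuple n u \<longrightarrow> x \<in> cells X n \<longrightarrow>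
         smap X m n \<alpha> (act X n u x) = act X m (u \<circ> \<alpha>) (smap X m n \<alpha> x))"

definition incl :: "nat \<Rightarrow> (nat \<Rightarrow> nat) \<Rightarrow> nat \<Rightarrow> nat \<Rightarrow> nat" where
  "incl k u = (\<lambda>j. if j = k then u else id)"

definition M_fix :: "nat set \<Rightarrow> (nat \<Rightarrow> nat) set" where
  "M_fix A = {u. inj u \<and> (\<forall>a\<in>A. u a = a)}"

definition supported :: "'a emsset \<Rightarrow> nat \<Rightarrow> nat \<Rightarrow> nat set \<Rightarrow> 'a \<Rightarrow> bool" where
  "supported X n k A x \<longleftrightarrow> (\<forall>u\<in>M_fix A. act X n (incl k u) x = x)"

definition coinfinite :: "nat set \<Rightarrow> bool" where
  "coinfinite A \<longleftrightarrow> infinite (- A)"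

definition mild :: "'a emsset \<Rightarrow> bool" where
  "mild X \<longleftrightarrow> (\<forall>n x. x \<in> cells X n \<longrightarrow> (\<forall>k\<le>n. \<exists>A. coinfinite A \<and> supported X n k A x))"

definition prod_em :: "'a emsset \<Rightarrow> 'b emsset \<Rightarrow> ('a \<times> 'b) emsset" where
  "prod_em X Y = \<lparr> cells = (\<lambda>n. cells X n \<times> cells Y n),
     smap = (\<lambda>m n \<alpha> (x, y). (smap X m n \<alpha> x, smap Y m n \<alpha> y)),
     act = (\<lambda>n u (x, y). (act X n u x, act Y n u y)) \<rparr>"

definition tensor :: "'k sset \<Rightarrow> 'a emsset \<Rightarrow> ('k \<times> 'a) emsset" where
  "tensor K X = \<lparr> cells = (\<lambda>n. cells K n \<times> cells X n),
     smap = (\<lambda>m n \<alpha> (s, x). (smap K m n \<alpha> s, smap X m n \<alpha> x)),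
     act = (\<lambda>n u (s, x). (s, act X n u x)) \<rparr>"

definition box :: "'a emsset \<Rightarrow> 'b emsset \<Rightarrow> ('a \<times> 'b) emsset" where
  "box X Y = \<lparr> cells = (\<lambda>n. {(x, y). x \<in> cells X n \<and> y \<in> cells Y n \<and>
        (\<forall>k\<le>n. \<exists>A B. A \<inter> B = {} \<and> coinfinite (A \<union> B) \<and>
                       supported X n k A x \<and> supported Y n k B y)}),
     smap = smap (prod_em X Y),
     act = act (prod_em X Y) \<rparr>"

definition em_map :: "'a emsset \<Rightarrow> 'b emsset \<Rightarrow> (nat \<Rightarrow> 'a \<Rightarrow> 'b) \<Rightarrow> bool" where
  "em_map X Y f \<longleftrightarrow>
     (\<forall>n x. x \<in> cells X n \<longrightarrow> f n x \<in> cells Y n) \<and>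
     (\<forall>m n \<alpha> x. simp_op m n \<alpha> \<longrightarrow> x \<in> cells X n \<longrightarrow>
         f m (smap X m n \<alpha> x) = smap Y m n \<alpha> (f n x)) \<and>
     (\<forall>n u x. emtuple n u \<longrightarrow> x \<in> cells X n \<longrightarrow> f n (act X n u x) = act Y n u (f n x))"

end

theory Submission
  imports Defs "HOL-Library.Infinite_Set"
begin

lemma smap_closed:
  assumes "is_emsset X" shows "simp_op m n \<alpha> \<Longrightarrow> x \<in> cells X n \<Longrightarrow> smap X m n \<alpha> x \<in> cells X m"
  using assms unfolding is_emsset_def is_sset_def by simp

lemma smap_id:
  assumes "is_emsset X" shows "x \<in> cells X n \<Longrightarrow> smap X n n id x = x"
  using assms unfolding is_emsset_def is_sset_def by simp

lemma act_closed:
  assumes "is_emsset X" shows "emtuple n u \<Longrightarrow> x \<in> cells X n \<Longrightarrow> act X n u x \<in> cells X n"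
  using assms unfolding is_emsset_def is_sset_def by simp

lemma act_id:
  assumes "is_emsset X" shows "x \<in> cells X n \<Longrightarrow> act X n (\<lambda>k. id) x = x"
  using assms unfolding is_emsset_def is_sset_def by simp

lemma act_comp:
  assumes "is_emsset X" shows "emtuple n u \<Longrightarrow> emtuple n v \<Longrightarrow> x \<in> cells X n \<Longrightarrow> act X n u (act X n v x) = act X n (\<lambda>k. u k \<circ> v k) x"
  using assms unfolding is_emsset_def is_sset_def by simp

lemma act_cong:
  assumes "is_emsset X" shows "(\<forall>k\<le>n. u k = v k) \<Longrightarrow> x \<in> cells X n \<Longrightarrow> act X n u x = act X n v x"
  using assms unfolding is_emsset_def is_sset_def by simp

lemma smap_act:
  assumes "is_emsset X" shows "simp_op m n \<alpha> \<Longrightarrow> emtuple n u \<Longrightarrow> x \<in> cells X n \<Longrightarrow> smap X m n \<alpha> (act X n u x) = act X m (u \<circ> \<alpha>) (smap X m n \<alpha> x)"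
  using assms unfolding is_emsset_def is_sset_def by simp

lemma M_fix_out: "w \<in> M_fix A \<Longrightarrow> z \<notin> A \<Longrightarrow> w z \<notin> A"
  unfolding M_fix_def by (metis (mono_tags, lifting) injD mem_Collect_eq)

lemma inf_image: "inj u \<Longrightarrow> infinite S \<Longrightarrow> infinite (u ` S)"
  by (metis finite_imageD inj_on_subset subset_UNIV)

lemma exists_bij_extend:
  fixes u :: "nat \<Rightarrow> nat" and A :: "nat set"
  assumes "coinfinite A" "inj u"
  shows "\<exists>t. bij t \<and> (\<forall>a\<in>A. t a = u a)"
proof -
  have S: "infinite (-A)" using assms(1) unfolding coinfinite_def .
  have "u ` (-A) \<subseteq> - (u ` A)" using assms(2) by (auto dest: injD)
  moreover have "infinite (u ` (-A))" using inf_image[OF assms(2) S] .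
  ultimately have T: "infinite (- (u ` A))" using finite_subset by blast
  define g where "g = enumerate (-(u`A)) \<circ> inv_into UNIV (enumerate (-A))"
  have g: "bij_betw g (-A) (-(u`A))"
    unfolding g_def by (rule bij_betw_trans[OF bij_betw_inv_into[OF bij_enumerate[OF S]] bij_enumerate[OF T]])
  define t where "t = (\<lambda>z. if z \<in> A then u z else g z)"
  have 1: "bij_betw t A (u`A)"
    using assms(2) unfolding t_def bij_betw_def inj_on_def by (auto dest: injD)
  have 2: "bij_betw t (-A) (-(u`A))"
    using g unfolding t_def by (rule bij_betw_cong[THEN iffD1, rotated]) auto
  have "bij_betw t (A \<union> -A) (u`A \<union> -(u`A))"
    by (rule bij_betw_combine[OF 1 2]) auto
  then have "bij t" by simp
  then show ?thesis unfolding t_def by auto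
qed

lemma emtuple_upd: "emtuple n u \<Longrightarrow> inj w \<Longrightarrow> emtuple n (u(k:=w))"
  unfolding emtuple_def by auto

lemma emtuple_incl: "inj w \<Longrightarrow> emtuple n (incl k w)"
  unfolding emtuple_def incl_def by auto

lemma act_restrict:
  assumes X: "is_emsset X" and x: "x \<in> cells X n" and k: "k \<le> n" and A: "coinfinite A"
    and sup: "supported X n k A x" and u: "emtuple n u" and w: "inj w"
    and agree: "\<forall>a\<in>A. w a = u k a"
  shows "act X n (u(k:=w)) x = act X n u x"
proof -
  have uk: "inj (u k)" using u k unfolding emtuple_def by auto
  obtain t where t: "bij t" "\<forall>a\<in>A. t a = u k a" using exists_bij_extend[OF A uk] by blast
  have key: "act X n (u(k:=v)) x = act X n (u(k:=t)) x" if v: "inj v" "\<forall>a\<in>A. v a = u k a" for v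
  proof -
    define s where "s = inv t \<circ> v"
    have "inj (inv t)" using t(1) bij_imp_bij_inv bij_is_inj by blast
    then have si: "inj s" unfolding s_def using v(1) inj_compose by blast
    have "\<forall>a\<in>A. s a = a"
    proof
      fix a assume "a \<in> A"
      then have "v a = t a" using v(2) t(2) by simp
      then show "s a = a" unfolding s_def using bij_is_inj[OF t(1)] by (simp add: inv_f_f)
    qed
    then have sM: "s \<in> M_fix A" using si unfolding M_fix_def by auto
    have "act X n (u(k:=t)) x = act X n (u(k:=t)) (act X n (incl k s) x)"
      using sup sM unfolding supported_def by simp
    also have "\<dots> = act X n (\<lambda>j. (u(k:=t)) j \<circ> incl k s j) x"
      by (rule act_comp[OF X emtuple_upd[OF u bij_is_inj[OF t(1)]] emtuple_incl[OF si] x])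
    also have "\<dots> = act X n (u(k:=v)) x"
    proof (rule act_cong[OF X _ x], intro allI impI)
      fix j assume "j \<le> n"
      show "(u(k:=t)) j \<circ> incl k s j = (u(k:=v)) j"
        using surj_f_inv_f[OF bij_is_surj[OF t(1)]] unfolding incl_def s_def
        by (simp add: fun_eq_iff)
    qed
    finally show ?thesis by simp
  qed
  have "act X n (u(k:=w)) x = act X n (u(k:=t)) x" using key w agree by blast
  also have "\<dots> = act X n (u(k:=u k)) x" using key[of "u k"] uk by simp
  finally show ?thesis by simp
qed

lemma supported_act:
  assumes X: "is_emsset X" and x: "x \<in> cells X n" and k: "k \<le> n" and A: "coinfinite A"
    and sup: "supported X n k A x" and u: "emtuple n u"
  shows "supported X n k (u k ` A) (act X n u x)"
  unfolding supported_def
proof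
  fix v assume v: "v \<in> M_fix (u k ` A)"
  have vi: "inj v" using v unfolding M_fix_def by auto
  have uk: "inj (u k)" using u k unfolding emtuple_def by auto
  have "act X n (incl k v) (act X n u x) = act X n (\<lambda>j. incl k v j \<circ> u j) x"
    by (rule act_comp[OF X emtuple_incl[OF vi] u x])
  also have "\<dots> = act X n (u(k := v \<circ> u k)) x"
    by (rule act_cong[OF X _ x]) (auto simp: incl_def)
  also have "\<dots> = act X n u x"
    by (rule act_restrict[OF X x k A sup u]) (use vi uk v in \<open>auto simp: M_fix_def inj_compose\<close>)
  finally show "act X n (incl k v) (act X n u x) = act X n u x" .
qed

lemma emtuple_all: "(\<And>j. inj (u j)) \<Longrightarrow> emtuple n u"
  unfolding emtuple_def by auto

lemma M_fix_inj: "w \<in> M_fix A \<Longrightarrow> inj w"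
  unfolding M_fix_def by auto

lemma shift_map:
  fixes A Z :: "nat set"
  assumes Z: "infinite Z" "Z \<inter> A = {}"
  shows "(\<lambda>z. if z \<in> A then z else enumerate Z z) \<in> M_fix A"
    and "\<And>z. z \<notin> A \<Longrightarrow> (\<lambda>z. if z \<in> A then z else enumerate Z z) z \<in> Z"
proof -
  have e: "inj (enumerate Z)" using inj_enumerate[OF Z(1)] .
  have ez: "\<And>z. enumerate Z z \<in> Z" using enumerate_in_set[OF Z(1)] .
  show "(\<lambda>z. if z \<in> A then z else enumerate Z z) \<in> M_fix A"
    unfolding M_fix_def inj_def using e ez Z(2) by (auto dest: injD)
  show "\<And>z. z \<notin> A \<Longrightarrow> (\<lambda>z. if z \<in> A then z else enumerate Z z) z \<in> Z"
    using ez by simp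
qed

lemma smap_supported:
  assumes X: "is_emsset X" and x: "x \<in> cells X n" and al: "simp_op m n \<alpha>" and k: "k \<le> m"
    and A: "coinfinite A" and sup: "supported X n (\<alpha> k) A x"
  shows "supported X m k A (smap X m n \<alpha> x)"
proof -
  define y where "y = smap X m n \<alpha> x"
  have y: "y \<in> cells X m" unfolding y_def by (rule smap_closed[OF X al x])
  define P where "P = (\<lambda>p::nat\<Rightarrow>nat. \<lambda>j. if \<alpha> j = \<alpha> k then p else (id::nat\<Rightarrow>nat))"
  have Pt: "emtuple m (P p)" if "inj p" for p
    using that unfolding P_def by (intro emtuple_all) auto
  have F1: "act X m (P p) y = y" if p: "p \<in> M_fix A" for p
  proof -
    have pi: "inj p" using M_fix_inj[OF p] .
    have "incl (\<alpha> k) p \<circ> \<alpha> = P p" unfolding incl_def P_def by (simp add: fun_eq_iff)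
    moreover have "smap X m n \<alpha> (act X n (incl (\<alpha> k) p) x) = act X m (incl (\<alpha> k) p \<circ> \<alpha>) y"
      unfolding y_def by (rule smap_act[OF X al emtuple_incl[OF pi] x])
    moreover have "act X n (incl (\<alpha> k) p) x = x" using sup p unfolding supported_def by simp
    ultimately show ?thesis unfolding y_def by simp
  qed
  have F2: "act X m (incl j w) y = y"
    if j: "\<alpha> j = \<alpha> k" and w: "w \<in> M_fix A" and inf: "infinite (-A - w ` (-A))" for j w
  proof -
    define Z where "Z = -A - w ` (-A)"
    have wi: "inj w" using M_fix_inj[OF w] .
    define a where "a = (\<lambda>z. if z \<in> A \<union> Z then z else w z)"
    have wout: "\<And>z. z \<notin> A \<Longrightarrow> w z \<notin> A" using M_fix_out[OF w] .
    have wA: "\<And>z. z \<in> A \<Longrightarrow> w z = z" using w unfolding M_fix_def by auto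
    have nz: "w z \<notin> A \<union> Z" if "z \<notin> A \<union> Z" for z
    proof -
      have "z \<notin> A" using that by simp
      then have "w z \<notin> A" using wout by simp
      moreover have "w z \<in> w ` (-A)" using \<open>z \<notin> A\<close> by simp
      ultimately show ?thesis unfolding Z_def by simp
    qed
    have ai: "inj a"
    proof (rule injI)
      fix z1 z2 assume eq: "a z1 = a z2"
      show "z1 = z2"
      proof (cases "z1 \<in> A \<union> Z")
        case c1: True
        show ?thesis
        proof (cases "z2 \<in> A \<union> Z")
          case True then show ?thesis using eq c1 unfolding a_def by simp
        next
          case False then show ?thesis using eq c1 nz[OF False] unfolding a_def by simp
        qed
      next
        case c1: False
        show ?thesis
        proof (cases "z2 \<in> A \<union> Z")
          case True then show ?thesis using eq c1 nz[OF c1] unfolding a_def by simp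
        next
          case False
          then have "w z1 = w z2" using eq c1 unfolding a_def by simp
          then show ?thesis using injD[OF wi] by blast
        qed
      qed
    qed
    have aww: "a (w z) = w (w z)" for z
    proof (cases "z \<in> A")
      case True then show ?thesis using wA unfolding a_def by simp
    next
      case False
      then have "w z \<notin> A" "w z \<notin> Z" using wout unfolding Z_def by auto
      then show ?thesis unfolding a_def by simp
    qed
    have ZA: "Z \<inter> A = {}" unfolding Z_def by auto
    define q where "q = (\<lambda>z. if z \<in> A then z else enumerate Z z)"
    have qM: "q \<in> M_fix A" unfolding q_def using shift_map(1)[OF inf[folded Z_def] ZA] .
    have qZ: "\<And>z. z \<notin> A \<Longrightarrow> q z \<in> Z" unfolding q_def using shift_map(2)[OF inf[folded Z_def] ZA] .
    have aq: "a (q z) = q z" for z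
      using qZ[of z] unfolding a_def by (cases "z \<in> A") (auto simp: q_def)
    have "act X m (incl j w) y = act X m (incl j w) (act X m (P w) y)" using F1[OF w] by simp
    also have "\<dots> = act X m (\<lambda>i. incl j w i \<circ> P w i) y"
      by (rule act_comp[OF X emtuple_incl[OF wi] Pt[OF wi] y])
    also have "(\<lambda>i. incl j w i \<circ> P w i) = (\<lambda>i. incl j a i \<circ> P w i)"
      using j aww unfolding incl_def P_def by (auto simp: fun_eq_iff)
    also have "act X m (\<lambda>i. incl j a i \<circ> P w i) y = act X m (incl j a) (act X m (P w) y)"
      by (rule act_comp[OF X emtuple_incl[OF ai] Pt[OF wi] y, symmetric])
    also have "\<dots> = act X m (incl j a) y" using F1[OF w] by simp
    also have "\<dots> = act X m (incl j a) (act X m (P q) y)" using F1[OF qM] by simp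
    also have "\<dots> = act X m (\<lambda>i. incl j a i \<circ> P q i) y"
      by (rule act_comp[OF X emtuple_incl[OF ai] Pt[OF M_fix_inj[OF qM]] y])
    also have "(\<lambda>i. incl j a i \<circ> P q i) = P q"
      using j aq unfolding incl_def P_def by (auto simp: fun_eq_iff)
    also have "act X m (P q) y = y" using F1[OF qM] .
    finally show ?thesis .
  qed
  have F3: "act X m (\<lambda>i. if i \<in> F then q else id) y = y"
    if "finite F" "F \<subseteq> {j. \<alpha> j = \<alpha> k}" and q: "q \<in> M_fix A" "infinite (-A - q ` (-A))" for F q
    using that(1,2)
  proof (induction F rule: finite_induct)
    case empty
    show ?case using act_id[OF X y] by (simp add: id_def)
  next
    case (insert j F)
    have qi: "inj q" using M_fix_inj[OF q(1)] .
    have "(\<lambda>i. if i \<in> insert j F then q else id) = (\<lambda>i. incl j q i \<circ> (if i \<in> F then q else id))"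
      using insert(2) unfolding incl_def by (auto simp: fun_eq_iff)
    then have "act X m (\<lambda>i. if i \<in> insert j F then q else id) y
       = act X m (incl j q) (act X m (\<lambda>i. if i \<in> F then q else id) y)"
      using act_comp[OF X emtuple_incl[OF qi] emtuple_all[of "\<lambda>i. if i \<in> F then q else id"] y] qi
      by simp
    also have "\<dots> = act X m (incl j q) y" using insert by simp
    also have "\<dots> = y" using F2[OF _ q] insert(4) by simp
    finally show ?case .
  qed
  show ?thesis
    unfolding supported_def y_def[symmetric]
  proof
    fix v assume v: "v \<in> M_fix A"
    have vi: "inj v" using M_fix_inj[OF v] .
    define E where "E = -A"
    have Einf: "infinite E" using A unfolding E_def coinfinite_def .
    define Z where "Z = enumerate E ` range (\<lambda>i::nat. 2*i)"
    have ei: "inj (enumerate E)" using inj_enumerate[OF Einf] .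
    have evinf: "infinite (range (\<lambda>i::nat. 2*i))"
      by (rule inf_image) (auto simp: inj_def)
    have odinf: "infinite (range (\<lambda>i::nat. 2*i+1))"
      by (rule inf_image) (auto simp: inj_def)
    have Zinf: "infinite Z" unfolding Z_def using inf_image[OF ei evinf] .
    have ZE: "Z \<subseteq> E" unfolding Z_def using enumerate_in_set[OF Einf] by auto
    have ZA: "Z \<inter> A = {}" using ZE unfolding E_def by auto
    define q where "q = (\<lambda>z. if z \<in> A then z else enumerate Z z)"
    have qM: "q \<in> M_fix A" unfolding q_def using shift_map(1)[OF Zinf ZA] .
    have qZ: "\<And>z. z \<notin> A \<Longrightarrow> q z \<in> Z" unfolding q_def using shift_map(2)[OF Zinf ZA] .
    have sub: "enumerate E ` range (\<lambda>i::nat. 2*i+1) \<subseteq> -A - q ` (-A)"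
    proof
      fix z assume "z \<in> enumerate E ` range (\<lambda>i::nat. 2*i+1)"
      then obtain i where i: "z = enumerate E (2*i+1)" by auto
      have "z \<in> E" using i enumerate_in_set[OF Einf] by simp
      moreover have "z \<notin> Z"
      proof
        assume "z \<in> Z"
        then obtain j where "z = enumerate E (2*j)" unfolding Z_def by auto
        then have "2*j = 2*i+1" using i injD[OF ei] by metis
        then show False by presburger
      qed
      ultimately show "z \<in> -A - q ` (-A)" using qZ unfolding E_def by auto
    qed
    have qinf: "infinite (-A - q ` (-A))"
      using inf_image[OF ei odinf] sub finite_subset by blast
    have vqM: "v \<circ> q \<in> M_fix A"
      using v qM unfolding M_fix_def by (auto intro: inj_compose)
    have "v ` (-A - q ` (-A)) \<subseteq> -A - (v \<circ> q) ` (-A)"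
      using M_fix_out[OF v] injD[OF vi] by auto
    then have vqinf: "infinite (-A - (v \<circ> q) ` (-A))"
      using inf_image[OF vi qinf] finite_subset by blast
    define F where "F = {j. j \<le> m \<and> \<alpha> j = \<alpha> k \<and> j \<noteq> k}"
    have Ffin: "finite F" unfolding F_def by simp
    have "act X m (incl k v) y = act X m (incl k v) (act X m (P q) y)" using F1[OF qM] by simp
    also have "\<dots> = act X m (\<lambda>i. incl k v i \<circ> P q i) y"
      by (rule act_comp[OF X emtuple_incl[OF vi] Pt[OF M_fix_inj[OF qM]] y])
    also have "\<dots> = act X m (\<lambda>i. incl k (v \<circ> q) i \<circ> (if i \<in> F then q else id)) y"
      by (rule act_cong[OF X _ y]) (auto simp: incl_def P_def F_def)
    also have "\<dots> = act X m (incl k (v \<circ> q)) (act X m (\<lambda>i. if i \<in> F then q else id) y)"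
      using act_comp[OF X emtuple_incl[OF M_fix_inj[OF vqM]] emtuple_all[of "\<lambda>i. if i \<in> F then q else id"] y]
        M_fix_inj[OF qM]
      by simp
    also have "\<dots> = act X m (incl k (v \<circ> q)) y"
    proof -
      have "F \<subseteq> {j. \<alpha> j = \<alpha> k}" unfolding F_def by auto
      then show ?thesis using F3[OF Ffin _ qM qinf] by simp
    qed
    also have "\<dots> = y" using F2[OF refl vqM vqinf] .
    finally show "act X m (incl k v) y = y" .
  qed
qed

lemma smap_cong:
  assumes "is_emsset X" "\<forall>i\<le>m. \<alpha> i = \<beta> i" "x \<in> cells X n"
  shows "smap X m n \<alpha> x = smap X m n \<beta> x"
proof -
  have "\<forall>m n \<alpha> \<beta> x. (\<forall>i\<le>m. \<alpha> i = \<beta> i) \<longrightarrow> x \<in> cells X n \<longrightarrow>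
         smap X m n \<alpha> x = smap X m n \<beta> x"
    using assms(1) unfolding is_emsset_def is_sset_def by (elim conjE)
  then show ?thesis using assms(2,3) by blast
qed

lemma smap_comp:
  assumes "is_emsset X" "simp_op k m \<beta>" "simp_op m n \<alpha>" "x \<in> cells X n"
  shows "smap X k m \<beta> (smap X m n \<alpha> x) = smap X k n (\<alpha> \<circ> \<beta>) x"
proof -
  have "\<forall>k m n \<alpha> \<beta> x. simp_op k m \<beta> \<longrightarrow> simp_op m n \<alpha> \<longrightarrow> x \<in> cells X n \<longrightarrow>
         smap X k m \<beta> (smap X m n \<alpha> x) = smap X k n (\<alpha> \<circ> \<beta>) x"
    using assms(1) unfolding is_emsset_def is_sset_def by (elim conjE)
  then show ?thesis using assms(2-4) by blast
qed

lemma coinfinite_image: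
  fixes u :: "nat \<Rightarrow> nat"
  assumes "inj u" "coinfinite C" shows "coinfinite (u ` C)"
proof -
  have "u ` (-C) \<subseteq> - (u ` C)" using assms(1) by (auto dest: injD)
  moreover have "infinite (u ` (-C))" using inf_image[OF assms(1)] assms(2) unfolding coinfinite_def .
  ultimately show ?thesis unfolding coinfinite_def using finite_subset by blast
qed

lemma box_cells:
  "(x, y) \<in> cells (box X Y) n \<longleftrightarrow> x \<in> cells X n \<and> y \<in> cells Y n \<and>
     (\<forall>k\<le>n. \<exists>A B. A \<inter> B = {} \<and> coinfinite (A \<union> B) \<and> supported X n k A x \<and> supported Y n k B y)"
  by (simp add: box_def)

lemma box_smap: "smap (box X Y) m n \<alpha> (x, y) = (smap X m n \<alpha> x, smap Y m n \<alpha> y)"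
  by (simp add: box_def prod_em_def)

lemma box_act: "act (box X Y) n u (x, y) = (act X n u x, act Y n u y)"
  by (simp add: box_def prod_em_def)

lemma coinf_mono: "coinfinite B \<Longrightarrow> A \<subseteq> B \<Longrightarrow> coinfinite A"
  unfolding coinfinite_def by (meson Compl_anti_mono finite_subset)

lemma box_is_emsset:
  assumes X: "is_emsset X" and Y: "is_emsset Y"
  shows "is_emsset (box X Y)"
proof -
  have S1: "smap (box X Y) m n \<alpha> p \<in> cells (box X Y) m"
    if al: "simp_op m n \<alpha>" and p: "p \<in> cells (box X Y) n" for m n \<alpha> p
  proof -
    obtain x y where pxy: "p = (x, y)" by (cases p)
    have xy: "x \<in> cells X n" "y \<in> cells Y n"
      and sp: "\<forall>k\<le>n. \<exists>A B. A \<inter> B = {} \<and> coinfinite (A \<union> B) \<and> supported X n k A x \<and> supported Y n k B y"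
      using p unfolding pxy box_cells by auto
    have "\<exists>A B. A \<inter> B = {} \<and> coinfinite (A \<union> B) \<and> supported X m k A (smap X m n \<alpha> x)
            \<and> supported Y m k B (smap Y m n \<alpha> y)" if k: "k \<le> m" for k
    proof -
      have "\<alpha> k \<le> n" using al k unfolding simp_op_def by auto
      then obtain A B where AB: "A \<inter> B = {}" "coinfinite (A \<union> B)" "supported X n (\<alpha> k) A x"
        "supported Y n (\<alpha> k) B y" using sp by blast
      have cA: "coinfinite A" "coinfinite B" using AB(2) coinf_mono by blast+
      show ?thesis
        using AB smap_supported[OF X xy(1) al k cA(1) AB(3)] smap_supported[OF Y xy(2) al k cA(2) AB(4)]
        by blast
    qed
    then show ?thesis unfolding pxy box_smap box_cells
      using smap_closed[OF X al xy(1)] smap_closed[OF Y al xy(2)] by blast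
  qed
  have A1: "act (box X Y) n u p \<in> cells (box X Y) n"
    if u: "emtuple n u" and p: "p \<in> cells (box X Y) n" for n u p
  proof -
    obtain x y where pxy: "p = (x, y)" by (cases p)
    have xy: "x \<in> cells X n" "y \<in> cells Y n"
      and sp: "\<forall>k\<le>n. \<exists>A B. A \<inter> B = {} \<and> coinfinite (A \<union> B) \<and> supported X n k A x \<and> supported Y n k B y"
      using p unfolding pxy box_cells by auto
    have "\<exists>A B. A \<inter> B = {} \<and> coinfinite (A \<union> B) \<and> supported X n k A (act X n u x)
            \<and> supported Y n k B (act Y n u y)" if k: "k \<le> n" for k
    proof -
      obtain A B where AB: "A \<inter> B = {}" "coinfinite (A \<union> B)" "supported X n k A x"
        "supported Y n k B y" using sp k by blast
      have cA: "coinfinite A" "coinfinite B" using AB(2) coinf_mono by blast+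
      have uk: "inj (u k)" using u k unfolding emtuple_def by auto
      have "u k ` A \<inter> u k ` B = {}" using AB(1) uk by (auto dest: injD)
      moreover have "coinfinite (u k ` A \<union> u k ` B)"
        using coinfinite_image[OF uk AB(2)] by (simp add: image_Un)
      ultimately show ?thesis
        using supported_act[OF X xy(1) k cA(1) AB(3) u] supported_act[OF Y xy(2) k cA(2) AB(4) u]
        by blast
    qed
    then show ?thesis unfolding pxy box_act box_cells
      using act_closed[OF X u xy(1)] act_closed[OF Y u xy(2)] by blast
  qed
  show ?thesis
    unfolding is_emsset_def is_sset_def
  proof (intro conjI allI impI)
    fix m n \<alpha> p assume "simp_op m n \<alpha>" "p \<in> cells (box X Y) n"
    then show "smap (box X Y) m n \<alpha> p \<in> cells (box X Y) m" using S1 by blast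
  next
    fix m n :: nat and \<alpha> \<beta> :: "nat \<Rightarrow> nat" and p assume h: "\<forall>i\<le>m. \<alpha> i = \<beta> i" "p \<in> cells (box X Y) n"
    then show "smap (box X Y) m n \<alpha> p = smap (box X Y) m n \<beta> p"
      by (cases p) (simp add: box_smap box_cells smap_cong[OF X] smap_cong[OF Y])
  next
    fix n p assume h: "p \<in> cells (box X Y) n"
    then show "smap (box X Y) n n id p = p"
      by (cases p) (simp add: box_smap box_cells smap_id[OF X] smap_id[OF Y])
  next
    fix k m n \<alpha> \<beta> p assume h: "simp_op k m \<beta>" "simp_op m n \<alpha>" "p \<in> cells (box X Y) n"
    then show "smap (box X Y) k m \<beta> (smap (box X Y) m n \<alpha> p) = smap (box X Y) k n (\<alpha> \<circ> \<beta>) p"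
      by (cases p) (simp add: box_smap box_cells smap_comp[OF X] smap_comp[OF Y])
  next
    fix n u p assume "emtuple n u" "p \<in> cells (box X Y) n"
    then show "act (box X Y) n u p \<in> cells (box X Y) n" using A1 by blast
  next
    fix n p assume h: "p \<in> cells (box X Y) n"
    then show "act (box X Y) n (\<lambda>k. id) p = p"
      by (cases p) (simp add: box_act box_cells act_id[OF X] act_id[OF Y])
  next
    fix n u v p assume h: "emtuple n u" "emtuple n v" "p \<in> cells (box X Y) n"
    then show "act (box X Y) n u (act (box X Y) n v p) = act (box X Y) n (\<lambda>k. u k \<circ> v k) p"
      by (cases p) (simp add: box_act box_cells act_comp[OF X] act_comp[OF Y])
  next
    fix n :: nat and u v :: "nat \<Rightarrow> nat \<Rightarrow> nat" and p assume h: "\<forall>k\<le>n. u k = v k" "p \<in> cells (box X Y) n"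
    then show "act (box X Y) n u p = act (box X Y) n v p"
      by (cases p) (simp add: box_act box_cells act_cong[OF X] act_cong[OF Y])
  next
    fix m n \<alpha> u p assume h: "simp_op m n \<alpha>" "emtuple n u" "p \<in> cells (box X Y) n"
    then show "smap (box X Y) m n \<alpha> (act (box X Y) n u p) = act (box X Y) m (u \<circ> \<alpha>) (smap (box X Y) m n \<alpha> p)"
      by (cases p) (simp add: box_act box_smap box_cells smap_act[OF X] smap_act[OF Y])
  qed
qed

lemma box_mild: "mild (box X Y)"
  unfolding mild_def
proof (intro allI impI)
  fix n k p assume p: "p \<in> cells (box X Y) n" and k: "k \<le> n"
  obtain x y where pxy: "p = (x, y)" by (cases p)
  obtain A B where AB: "A \<inter> B = {}" "coinfinite (A \<union> B)" "supported X n k A x" "supported Y n k B y"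
    using p k unfolding pxy box_cells by blast
  have "supported (box X Y) n k (A \<union> B) (x, y)"
    unfolding supported_def box_act
  proof
    fix u assume "u \<in> M_fix (A \<union> B)"
    then have "u \<in> M_fix A" "u \<in> M_fix B" unfolding M_fix_def by auto
    then show "(act X n (incl k u) x, act Y n (incl k u) y) = (x, y)"
      using AB(3,4) unfolding supported_def by simp
  qed
  then show "\<exists>A. coinfinite A \<and> supported (box X Y) n k A p" using AB(2) pxy by blast
qed

lemma supported_map:
  assumes f: "em_map X X' f" and x: "x \<in> cells X n" and sp: "supported X n k A x"
  shows "supported X' n k A (f n x)"
  unfolding supported_def
proof
  fix u assume u: "u \<in> M_fix A"
  have "emtuple n (incl k u)" using u by (intro emtuple_incl) (simp add: M_fix_def)
  then have "act X' n (incl k u) (f n x) = f n (act X n (incl k u) x)"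
    using f x unfolding em_map_def by simp
  also have "\<dots> = f n x" using sp u unfolding supported_def by simp
  finally show "act X' n (incl k u) (f n x) = f n x" .
qed

lemma tensor_cells: "(s, x) \<in> cells (tensor K X) n \<longleftrightarrow> s \<in> cells K n \<and> x \<in> cells X n"
  by (simp add: tensor_def)

lemma supported_tensor: "supported (tensor K X) n k A (s, x) \<longleftrightarrow> supported X n k A x"
  by (simp add: supported_def tensor_def)

lemma tensor_mild: "mild X \<Longrightarrow> mild (tensor K X)"
  unfolding mild_def
proof (intro allI impI)
  fix n p k assume m: "\<forall>n x. x \<in> cells X n \<longrightarrow> (\<forall>k\<le>n. \<exists>A. coinfinite A \<and> supported X n k A x)"
    and p: "p \<in> cells (tensor K X) n" and k: "k \<le> n"
  obtain s x where pxy: "p = (s, x)" by (cases p)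
  show "\<exists>A. coinfinite A \<and> supported (tensor K X) n k A p"
    using m p k unfolding pxy tensor_cells supported_tensor by blast
qed

lemma tensor_bij1:
  "bij_betw (\<lambda>(s, (x, y)). ((s, x), y)) (cells (tensor K (box X Y)) n) (cells (box (tensor K X) Y) n)"
proof (rule bij_betw_byWitness[where f'="\<lambda>((s, x), y). (s, (x, y))"])
  show "\<forall>a\<in>cells (tensor K (box X Y)) n. (\<lambda>((s, x), y). (s, x, y)) ((\<lambda>(s, x, y). ((s, x), y)) a) = a"
    by auto
  show "\<forall>a'\<in>cells (box (tensor K X) Y) n. (\<lambda>(s, x, y). ((s, x), y)) ((\<lambda>((s, x), y). (s, x, y)) a') = a'"
    by auto
  show "(\<lambda>(s, x, y). ((s, x), y)) ` cells (tensor K (box X Y)) n \<subseteq> cells (box (tensor K X) Y) n"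
  proof
    fix z assume "z \<in> (\<lambda>(s, x, y). ((s, x), y)) ` cells (tensor K (box X Y)) n"
    then obtain s x y where "z = ((s, x), y)" "(s, (x, y)) \<in> cells (tensor K (box X Y)) n" by auto
    then show "z \<in> cells (box (tensor K X) Y) n"
      by (simp add: tensor_cells box_cells supported_tensor)
  qed
  show "(\<lambda>((s, x), y). (s, x, y)) ` cells (box (tensor K X) Y) n \<subseteq> cells (tensor K (box X Y)) n"
  proof
    fix z assume "z \<in> (\<lambda>((s, x), y). (s, x, y)) ` cells (box (tensor K X) Y) n"
    then obtain s x y where "z = (s, (x, y))" "((s, x), y) \<in> cells (box (tensor K X) Y) n" by auto
    then show "z \<in> cells (tensor K (box X Y)) n"
      by (simp add: tensor_cells box_cells supported_tensor)
  qed
qed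

lemma tensor_bij2:
  "bij_betw (\<lambda>(s, (x, y)). (x, (s, y))) (cells (tensor K (box X Y)) n) (cells (box X (tensor K Y)) n)"
proof (rule bij_betw_byWitness[where f'="\<lambda>(x, (s, y)). (s, (x, y))"])
  show "\<forall>a\<in>cells (tensor K (box X Y)) n. (\<lambda>(x, s, y). (s, x, y)) ((\<lambda>(s, x, y). (x, s, y)) a) = a"
    by auto
  show "\<forall>a'\<in>cells (box X (tensor K Y)) n. (\<lambda>(s, x, y). (x, s, y)) ((\<lambda>(x, s, y). (s, x, y)) a') = a'"
    by auto
  show "(\<lambda>(s, x, y). (x, s, y)) ` cells (tensor K (box X Y)) n \<subseteq> cells (box X (tensor K Y)) n"
  proof
    fix z assume "z \<in> (\<lambda>(s, x, y). (x, s, y)) ` cells (tensor K (box X Y)) n"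
    then obtain s x y where "z = (x, (s, y))" "(s, (x, y)) \<in> cells (tensor K (box X Y)) n" by auto
    then show "z \<in> cells (box X (tensor K Y)) n"
      by (simp add: tensor_cells box_cells supported_tensor)
  qed
  show "(\<lambda>(x, s, y). (s, x, y)) ` cells (box X (tensor K Y)) n \<subseteq> cells (tensor K (box X Y)) n"
  proof
    fix z assume "z \<in> (\<lambda>(x, s, y). (s, x, y)) ` cells (box X (tensor K Y)) n"
    then obtain s x y where "z = (s, (x, y))" "(x, (s, y)) \<in> cells (box X (tensor K Y)) n" by auto
    then show "z \<in> cells (tensor K (box X Y)) n"
      by (simp add: tensor_cells box_cells supported_tensor)
  qed
qed

theorem proposition2p17:
  fixes X :: "'a emsset" and Y :: "'b emsset"
  assumes "is_emsset X" and "is_emsset Y" and "mild X" and "mild Y"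
  shows
    \<comment> \<open>X box Y is a mild E M-simplicial subset of X x Y\<close>
    "(\<forall>n. cells (box X Y) n \<subseteq> cells (prod_em X Y) n)
     \<and> is_emsset (box X Y) \<and> mild (box X Y)
     \<comment> \<open>functoriality in E M-maps between mild objects\<close>
     \<and> (\<forall>(X' :: 'c emsset) (Y' :: 'd emsset) f g.
          is_emsset X' \<longrightarrow> is_emsset Y' \<longrightarrow> mild X' \<longrightarrow> mild Y' \<longrightarrow>
          em_map X X' f \<longrightarrow> em_map Y Y' g \<longrightarrow>
          (\<forall>n x y. (x, y) \<in> cells (box X Y) n \<longrightarrow> (f n x, g n y) \<in> cells (box X' Y') n))
     \<comment> \<open>simplicial functoriality: n-simplices of mapping spaces, i.e. E M-maps out of Delta p x (-)\<close>
     \<and> (\<forall>p (X' :: 'c emsset) (Y' :: 'd emsset) f g.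
          is_emsset X' \<longrightarrow> is_emsset Y' \<longrightarrow> mild X' \<longrightarrow> mild Y' \<longrightarrow>
          em_map (tensor (Delta p) X) X' f \<longrightarrow> em_map (tensor (Delta p) Y) Y' g \<longrightarrow>
          (\<forall>n a x y. (a, (x, y)) \<in> cells (tensor (Delta p) (box X Y)) n \<longrightarrow>
              (f n (a, x), g n (a, y)) \<in> cells (box X' Y') n))
     \<comment> \<open>preservation of simplicial tensors in each variable\<close>
     \<and> (\<forall>K :: 'k sset. is_sset K \<longrightarrow>
          mild (tensor K X) \<and> mild (tensor K Y) \<and>
          (\<forall>n. bij_betw (\<lambda>(s, (x, y)). ((s, x), y))
                 (cells (tensor K (box X Y)) n) (cells (box (tensor K X) Y) n)) \<and>
          (\<forall>n. bij_betw (\<lambda>(s, (x, y)). (x, (s, y)))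
                 (cells (tensor K (box X Y)) n) (cells (box X (tensor K Y)) n)))"
proof (intro conjI allI impI)
  show "\<And>n. cells (box X Y) n \<subseteq> cells (prod_em X Y) n"
    by (auto simp: box_def prod_em_def)
  show "is_emsset (box X Y)" using box_is_emsset[OF assms(1,2)] .
  show "mild (box X Y)" by (rule box_mild)
next
  fix X' :: "'c emsset" and Y' :: "'d emsset" and f g n x y
  assume f: "em_map X X' f" and g: "em_map Y Y' g" and xy: "(x, y) \<in> cells (box X Y) n"
  have x: "x \<in> cells X n" and y: "y \<in> cells Y n" using xy by (auto simp: box_cells)
  have fx: "f n x \<in> cells X' n" and gy: "g n y \<in> cells Y' n" using f g x y unfolding em_map_def by auto
  show "(f n x, g n y) \<in> cells (box X' Y') n"
    unfolding box_cells using fx gy xy supported_map[OF f x] supported_map[OF g y]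
    unfolding box_cells by meson
next
  fix p and X' :: "'c emsset" and Y' :: "'d emsset" and f g n a x y
  assume f: "em_map (tensor (Delta p) X) X' f" and g: "em_map (tensor (Delta p) Y) Y' g"
    and axy: "(a, (x, y)) \<in> cells (tensor (Delta p) (box X Y)) n"
  have a: "a \<in> cells (Delta p) n" and xy: "(x, y) \<in> cells (box X Y) n" using axy by (auto simp: tensor_cells)
  have x: "(a, x) \<in> cells (tensor (Delta p) X) n" and y: "(a, y) \<in> cells (tensor (Delta p) Y) n"
    using a xy by (auto simp: tensor_cells box_cells)
  have fx: "f n (a, x) \<in> cells X' n" and gy: "g n (a, y) \<in> cells Y' n"
    using f g x y unfolding em_map_def by auto
  have sx: "supported X n k A x \<Longrightarrow> supported X' n k A (f n (a, x))" for k A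
    using supported_map[OF f x] supported_tensor by metis
  have sy: "supported Y n k B y \<Longrightarrow> supported Y' n k B (g n (a, y))" for k B
    using supported_map[OF g y] supported_tensor by metis
  show "(f n (a, x), g n (a, y)) \<in> cells (box X' Y') n"
    unfolding box_cells using fx gy xy sx sy unfolding box_cells by meson
next
  fix K :: "'k sset" assume "is_sset K"
  show "mild (tensor K X)" using tensor_mild[OF assms(3)] .
  show "mild (tensor K Y)" using tensor_mild[OF assms(4)] .
  show "\<And>n. bij_betw (\<lambda>(s, (x, y)). ((s, x), y)) (cells (tensor K (box X Y)) n) (cells (box (tensor K X) Y) n)"
    by (rule tensor_bij1)
  show "\<And>n. bij_betw (\<lambda>(s, (x, y)). (x, (s, y))) (cells (tensor K (box X Y)) n) (cells (box X (tensor K Y)) n)"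
    by (rule tensor_bij2)
qed

end
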